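(* Fix a treatment group $d$, a post-treatment target age $a$, and a control group $d'$ with $d'>a\ge d$. Suppose the No Anticipation assumption holds for both genders $g\in\{f,m\}$ and both groups $d$ and $d'$, and suppose $$\frac{\gamma_{\mathrm{PT}}(f,d,d',a)}{APO(f,d,\infty,a)}=\frac{\gamma_{\mathrm{PT}}(m,d,d',a)}{APO(m,d,\infty,a)}.$$ Let $$P(d,a)=\frac{ATE(f,d,a)-ATE(m,d,a)}{APO(f,d,\infty,a)},\qquad \delta_P(d,d',a)=\frac{\delta_{\mathrm{ATE}}(f,d,d',a)-\delta_{\mathrm{ATE}}(m,d,d',a)}{\delta_{\mathrm{APO}}(f,d,d',a)}.$$ Then $$\delta_P(d,d',a)=P(d,a)\cdot\mathrm{Bias}_1(d,d',a)+\mathrm{Bias}_2(d,d',a),$$ where $$\mathrm{Bias}_1(d,d',a)=\frac{APO(f,d,\infty,a)}{APO(f,d,\infty,a)-\gamma_{\mathrm{PT}}(f,d,d',a)},\qquad \mathrm{Bias}_2(d,d',a)=\frac{\gamma_{\mathrm{PT}}(f,d,d',a)-\gamma_{\mathrm{PT}}(m,d,d',a)}{APO(f,d,\infty,a)-\gamma_{\mathrm{PT}}(f,d,d',a)}.$$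
   Context: Population of individuals with gender $G\in\{f,m\}$ and age at first childbirth $D$ (with $D=\infty$ meaning never). For each age $a$ and each (possibly counterfactual) first-birth age $d'\in\mathbb{N}\cup\{\infty\}$ there is a potential outcome (earnings) $Y_a(d')$; observed earnings satisfy consistency $Y_a=Y_a(D)$. Define $APO(g,d,d',a)=\mathbb{E}[Y_a(d')\mid G=g,D=d]$ and $ATE(g,d,a)=APO(g,d,d,a)-APO(g,d,\infty,a)$. Descriptive quantities: $\delta_{\mathrm{APO}}(g,d,d',a)=\mathbb{E}[Y_{d-1}\mid G=g,D=d]+\mathbb{E}[Y_a-Y_{d-1}\mid G=g,D=d']$, $\delta_{\mathrm{ATE}}(g,d,d',a)=\mathbb{E}[Y_a\mid G=g,D=d]-\delta_{\mathrm{APO}}(g,d,d',a)$. Parallel-trends violation: $\gamma_{\mathrm{PT}}(g,d,d',a)=APO(g,d,\infty,a)-APO(g,d,\infty,d-1)-[APO(g,d',\infty,a)-APO(g,d',\infty,d-1)]$. No Anticipation for gender $g$ and group $d$: $APO(g,d,d,b)=APO(g,d,\infty,b)$ for every age $b<d$. All denominators appearing are assumed nonzero. *)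

theory Defs
  imports "HOL-Probability.Probability" "HOL-Library.Extended_Nat"
begin

datatype gender = Fem | Mal

text \<open>Population: probability space M; G gender, D age at first birth (\<infinity> = never),
  Y a d' \<omega> the potential earnings at age a under first-birth age d'.\<close>

definition cexp :: "'w measure \<Rightarrow> ('w \<Rightarrow> real) \<Rightarrow> 'w set \<Rightarrow> real" where
  "cexp M X A = (LINT \<omega>:A|M. X \<omega>) / measure M A"

definition grp :: "'w measure \<Rightarrow> ('w \<Rightarrow> gender) \<Rightarrow> ('w \<Rightarrow> enat) \<Rightarrow> gender \<Rightarrow> enat \<Rightarrow> 'w set" where
  "grp M G D g d = {\<omega> \<in> space M. G \<omega> = g \<and> D \<omega> = d}"

definition Yobs :: "(nat \<Rightarrow> enat \<Rightarrow> 'w \<Rightarrow> real) \<Rightarrow> ('w \<Rightarrow> enat) \<Rightarrow> nat \<Rightarrow> 'w \<Rightarrow> real" where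
  "Yobs Y D a = (\<lambda>\<omega>. Y a (D \<omega>) \<omega>)"

definition APO where
  "APO M G D Y g d d' a = cexp M (Y a d') (grp M G D g d)"

definition ATE where
  "ATE M G D Y g d a = APO M G D Y g d d a - APO M G D Y g d \<infinity> a"

definition delta_APO where
  "delta_APO M G D Y g (d::nat) d' a =
     cexp M (Yobs Y D (d - 1)) (grp M G D g (enat d))
     + cexp M (\<lambda>\<omega>. Yobs Y D a \<omega> - Yobs Y D (d - 1) \<omega>) (grp M G D g d')"

definition delta_ATE where
  "delta_ATE M G D Y g (d::nat) d' a =
     cexp M (Yobs Y D a) (grp M G D g (enat d)) - delta_APO M G D Y g d d' a"

definition gamma_PT where
  "gamma_PT M G D Y g (d::nat) d' a =
     APO M G D Y g (enat d) \<infinity> a - APO M G D Y g (enat d) \<infinity> (d - 1)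
     - (APO M G D Y g d' \<infinity> a - APO M G D Y g d' \<infinity> (d - 1))"

definition no_anticipation where
  "no_anticipation M G D Y g (d::nat) \<longleftrightarrow>
     (\<forall>b<d. APO M G D Y g (enat d) (enat d) b = APO M G D Y g (enat d) \<infinity> b)"

end

theory Submission
  imports Defs
begin

lemma cexp_obs:
  assumes "grp M G D g e \<in> sets M"
  shows "cexp M (Yobs Y D b) (grp M G D g e) = APO M G D Y g e e b"
  unfolding APO_def cexp_def
  by (rule arg_cong[where f="\<lambda>x. x / _"], rule set_lebesgue_integral_cong[OF assms])
     (auto simp: grp_def Yobs_def)

lemma cexp_obs_diff:
  assumes "grp M G D g e \<in> sets M" "\<And>b e. integrable M (Y b e)"
  shows "cexp M (\<lambda>\<omega>. Yobs Y D a \<omega> - Yobs Y D c \<omega>) (grp M G D g e)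
     = APO M G D Y g e e a - APO M G D Y g e e c"
proof -
  have "(LINT \<omega>:grp M G D g e|M. Yobs Y D a \<omega> - Yobs Y D c \<omega>)
      = (LINT \<omega>:grp M G D g e|M. Y a e \<omega> - Y c e \<omega>)"
    by (rule set_lebesgue_integral_cong[OF assms(1)]) (auto simp: grp_def Yobs_def)
  also have "\<dots> = (LINT \<omega>:grp M G D g e|M. Y a e \<omega>) - (LINT \<omega>:grp M G D g e|M. Y c e \<omega>)"
    by (rule set_integral_diff(2)) (auto simp: set_integrable_def mult.commute[of "indicator _ _"]
          intro!: integrable_real_mult_indicator assms)
  finally show ?thesis unfolding APO_def cexp_def by (simp add: diff_divide_distrib)
qed

theorem lemma2:
  fixes M :: "'w measure" and G :: "'w \<Rightarrow> gender" and D :: "'w \<Rightarrow> enat"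
    and Y :: "nat \<Rightarrow> enat \<Rightarrow> 'w \<Rightarrow> real" and d d' a :: nat
  assumes ps: "prob_space M"
    and ev: "\<And>g e. grp M G D g e \<in> sets M"
    and int: "\<And>b e. integrable M (Y b e)"
    and pos: "\<And>g. measure M (grp M G D g (enat d)) \<noteq> 0"
             "\<And>g. measure M (grp M G D g (enat d')) \<noteq> 0"
    and d_pos: "0 < d"
    and ord: "d \<le> a" "a < d'"
    and NA: "\<And>g. no_anticipation M G D Y g d" "\<And>g. no_anticipation M G D Y g d'"
    and nz1: "APO M G D Y Fem (enat d) \<infinity> a \<noteq> 0"
    and nz2: "APO M G D Y Mal (enat d) \<infinity> a \<noteq> 0"
    and nz3: "delta_APO M G D Y Fem d (enat d') a \<noteq> 0"
    and nz4: "APO M G D Y Fem (enat d) \<infinity> a - gamma_PT M G D Y Fem d (enat d') a \<noteq> 0"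
    and ratio: "gamma_PT M G D Y Fem d (enat d') a / APO M G D Y Fem (enat d) \<infinity> a
              = gamma_PT M G D Y Mal d (enat d') a / APO M G D Y Mal (enat d) \<infinity> a"
  shows "(let P = (ATE M G D Y Fem (enat d) a - ATE M G D Y Mal (enat d) a)
                  / APO M G D Y Fem (enat d) \<infinity> a;
              dP = (delta_ATE M G D Y Fem d (enat d') a - delta_ATE M G D Y Mal d (enat d') a)
                  / delta_APO M G D Y Fem d (enat d') a;
              Bias1 = APO M G D Y Fem (enat d) \<infinity> a
                  / (APO M G D Y Fem (enat d) \<infinity> a - gamma_PT M G D Y Fem d (enat d') a);
              Bias2 = (gamma_PT M G D Y Fem d (enat d') a - gamma_PT M G D Y Mal d (enat d') a)
                  / (APO M G D Y Fem (enat d) \<infinity> a - gamma_PT M G D Y Fem d (enat d') a)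
          in dP = P * Bias1 + Bias2)"
proof -
  have key: "delta_APO M G D Y g d (enat d') a = APO M G D Y g (enat d) \<infinity> a - gamma_PT M G D Y g d (enat d') a"
    "delta_ATE M G D Y g d (enat d') a = ATE M G D Y g (enat d) a + gamma_PT M G D Y g d (enat d') a" for g
  proof -
    have a1: "APO M G D Y g (enat d) (enat d) (d-1) = APO M G D Y g (enat d) \<infinity> (d-1)"
      using NA(1)[of g] d_pos unfolding no_anticipation_def by auto
    have a2: "APO M G D Y g (enat d') (enat d') (d-1) = APO M G D Y g (enat d') \<infinity> (d-1)"
      using NA(2)[of g] d_pos ord unfolding no_anticipation_def by auto
    have a3: "APO M G D Y g (enat d') (enat d') a = APO M G D Y g (enat d') \<infinity> a"
      using NA(2)[of g] ord unfolding no_anticipation_def by auto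
    show "delta_APO M G D Y g d (enat d') a = APO M G D Y g (enat d) \<infinity> a - gamma_PT M G D Y g d (enat d') a"
      unfolding delta_APO_def gamma_PT_def cexp_obs[OF ev] cexp_obs_diff[OF ev int] a1 a2 a3 by simp
    then show "delta_ATE M G D Y g d (enat d') a = ATE M G D Y g (enat d) a + gamma_PT M G D Y g d (enat d') a"
      unfolding delta_ATE_def ATE_def cexp_obs[OF ev] by simp
  qed
  have alg: "((t1 + g1) - (t2 + g2)) / (A - g1) = (t1 - t2) / A * (A / (A - g1)) + (g1 - g2) / (A - g1)"
    if "A \<noteq> 0" "A - g1 \<noteq> 0" for t1 t2 g1 g2 A :: real
  proof -
    have "(t1 - t2) / A * (A / (A - g1)) = (t1 - t2) / (A - g1)" using that by simp
    then show ?thesis by (simp add: diff_divide_distrib add_divide_distrib)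
  qed
  show ?thesis unfolding Let_def key using alg[OF nz1 nz4] by simp
qed

end
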